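(* Let $\overrightarrow{C}$ be an oriented 2-regular graph with at least two cycle components, each of which is either unidirectional or $\Theta$-oriented. Then $\overrightarrow{C}$ is $\{1\}$-antimagic if and only if at most one of its cycle components is $\Theta$-oriented (and all others are unidirectional).
   Context: An oriented graph is a simple graph each of whose edges is given one direction (an arc $(u,v)$ goes from $u$ to $v$). For vertices $u,v$, $d(u,v)$ is the length of a shortest directed path from $u$ to $v$ ($d(u,u)=0$, $\infty$ if no path). For a set $D$ of nonnegative integers, $N_D(v)=\{y : d(v,y)\in D\}$; for a bijection $f:V\to\{1,\dots,|V|\}$, $\omega_D(v)=\sum_{x\in N_D(v)}f(x)$ (empty sum $0$); $f$ is $D$-antimagic if distinct vertices have distinct $D$-weights, and the graph is $D$-antimagic if such an $f$ exists. An oriented 2-regular graph is an orientation of a disjoint union of cycles, each of length at least $3$. A cycle component on $v_1,\dots,v_n$ is unidirectional if (up to relabeling) its arcs are $(v_i,v_{i+1})$, $1\le i\le n-1$, and $(v_n,v_1)$; it is $\Theta$-oriented if it has exactly one source (in-degree $0$) and exactly one sink (out-degree $0$) and these are adjacent, i.e. up to relabeling its arcs are $(v_i,v_{i+1})$, $1\le i\le n-1$, and $(v_1,v_n)$. *)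

theory Defs
  imports Main "HOL-Library.Extended_Nat"
begin

text \<open>An oriented graph: finite vertex set V, arc set A \<subseteq> V \<times> V, no loops,
  and no pair of opposite arcs (each edge of a simple graph gets one direction).\<close>
definition oriented_graph :: "'a set \<Rightarrow> ('a \<times> 'a) set \<Rightarrow> bool" where
  "oriented_graph V A \<longleftrightarrow> finite V \<and> A \<subseteq> V \<times> V \<and> (\<forall>v. (v, v) \<notin> A)
     \<and> (\<forall>u v. (u, v) \<in> A \<longrightarrow> (v, u) \<notin> A)"

definition dist_or :: "('a \<times> 'a) set \<Rightarrow> 'a \<Rightarrow> 'a \<Rightarrow> enat" where
  "dist_or A u v = (if \<exists>n. (u, v) \<in> A ^^ n then enat (LEAST n. (u, v) \<in> A ^^ n) else \<infinity>)"

definition nbhd_D :: "'a set \<Rightarrow> ('a \<times> 'a) set \<Rightarrow> nat set \<Rightarrow> 'a \<Rightarrow> 'a set" where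
  "nbhd_D V A D v = {y \<in> V. \<exists>k \<in> D. dist_or A v y = enat k}"

definition weight_D :: "'a set \<Rightarrow> ('a \<times> 'a) set \<Rightarrow> nat set \<Rightarrow> ('a \<Rightarrow> nat) \<Rightarrow> 'a \<Rightarrow> nat" where
  "weight_D V A D f v = (\<Sum>x \<in> nbhd_D V A D v. f x)"

definition D_antimagic_labeling :: "'a set \<Rightarrow> ('a \<times> 'a) set \<Rightarrow> nat set \<Rightarrow> ('a \<Rightarrow> nat) \<Rightarrow> bool" where
  "D_antimagic_labeling V A D f \<longleftrightarrow> bij_betw f V {1..card V} \<and> inj_on (weight_D V A D f) V"

definition D_antimagic :: "'a set \<Rightarrow> ('a \<times> 'a) set \<Rightarrow> nat set \<Rightarrow> bool" where
  "D_antimagic V A D \<longleftrightarrow> (\<exists>f. D_antimagic_labeling V A D f)"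

definition components :: "'a set \<Rightarrow> ('a \<times> 'a) set \<Rightarrow> 'a set set" where
  "components V A = {((A \<union> A\<inverse>)\<^sup>*) `` {v} | v. v \<in> V}"

definition unidirectional :: "('a \<times> 'a) set \<Rightarrow> 'a set \<Rightarrow> bool" where
  "unidirectional A C \<longleftrightarrow> (\<exists>n vs. n \<ge> 3 \<and> bij_betw vs {1..n} C \<and>
     A \<inter> (C \<times> C) = {(vs i, vs (Suc i)) | i. 1 \<le> i \<and> i < n} \<union> {(vs n, vs 1)})"

definition theta_oriented :: "('a \<times> 'a) set \<Rightarrow> 'a set \<Rightarrow> bool" where
  "theta_oriented A C \<longleftrightarrow> (\<exists>n vs. n \<ge> 3 \<and> bij_betw vs {1..n} C \<and>
     A \<inter> (C \<times> C) = {(vs i, vs (Suc i)) | i. 1 \<le> i \<and> i < n} \<union> {(vs 1, vs n)})"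

end

theory Submission
  imports Defs
begin

lemma nbhd1:
  assumes "oriented_graph V A"
  shows "nbhd_D V A {1} v = {y. (v,y) \<in> A}"
proof -
  have AV: "A \<subseteq> V \<times> V" and nl: "\<forall>v. (v,v) \<notin> A" using assms by (auto simp: oriented_graph_def)
  have "dist_or A v y = enat 1 \<longleftrightarrow> (v,y) \<in> A" for y
  proof
    assume "dist_or A v y = enat 1"
    then have ex: "\<exists>n. (v, y) \<in> A ^^ n" and l: "(LEAST n. (v, y) \<in> A ^^ n) = 1"
      by (auto simp: dist_or_def split: if_splits)
    from LeastI_ex[OF ex] l show "(v,y) \<in> A" by simp
  next
    assume h: "(v,y) \<in> A"
    then have "v \<noteq> y" using nl by auto
    have "(LEAST n. (v, y) \<in> A ^^ n) = 1"
    proof (rule Least_equality)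
      show "(v,y) \<in> A ^^ 1" using h by simp
      fix m assume "(v,y) \<in> A ^^ m"
      then show "1 \<le> m" using \<open>v \<noteq> y\<close> by (cases m) auto
    qed
    then show "dist_or A v y = enat 1" using h unfolding dist_or_def
      by (metis One_nat_def relpow_1)
  qed
  then show ?thesis using AV unfolding nbhd_D_def by auto
qed

lemma comp_closed:
  assumes "C \<in> components V A" "(x,y) \<in> A"
  shows "x \<in> C \<longleftrightarrow> y \<in> C"
proof -
  obtain u where C: "C = ((A \<union> A\<inverse>)\<^sup>*) `` {u}" using assms unfolding components_def by auto
  have "(x,y) \<in> (A \<union> A\<inverse>)\<^sup>*" "(y,x) \<in> (A \<union> A\<inverse>)\<^sup>*" using assms(2) by auto
  then show ?thesis unfolding C by (meson Image_singleton_iff rtrancl_trans)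
qed

lemma comp_cover:
  assumes "v \<in> V" shows "\<exists>C \<in> components V A. v \<in> C"
  using assms unfolding components_def by auto

lemma comp_eq:
  assumes "C1 \<in> components V A" "C2 \<in> components V A" "z \<in> C1" "z \<in> C2"
  shows "C1 = C2"
proof -
  let ?R = "(A \<union> A\<inverse>)\<^sup>*"
  have sym: "(x,y) \<in> ?R \<Longrightarrow> (y,x) \<in> ?R" for x y
  proof -
    assume "(x,y) \<in> ?R"
    then have "(y,x) \<in> (( A \<union> A\<inverse>)\<inverse>)\<^sup>*" by (simp add: rtrancl_converseI)
    moreover have "( A \<union> A\<inverse>)\<inverse> = A \<union> A\<inverse>" by auto
    ultimately show ?thesis by simp
  qed
  have key: "C \<in> components V A \<Longrightarrow> z \<in> C \<Longrightarrow> C = ?R `` {z}" for C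
  proof -
    assume "C \<in> components V A" "z \<in> C"
    then obtain u where C: "C = ?R `` {u}" and "(u,z) \<in> ?R" unfolding components_def by auto
    then show ?thesis using sym by (auto intro: rtrancl_trans)
  qed
  show ?thesis using key assms by metis
qed

lemma comp_finite:
  assumes "finite V" shows "finite (components V A)"
proof -
  have "components V A = (\<lambda>v. ((A \<union> A\<inverse>)\<^sup>*) `` {v}) ` V" unfolding components_def by auto
  then show ?thesis using assms by simp
qed

lemma uni_props:
  assumes "unidirectional A C" and cl: "\<forall>x y. (x,y) \<in> A \<longrightarrow> (x \<in> C \<longleftrightarrow> y \<in> C)"
  shows "\<forall>x\<in>C. \<exists>!y. (x,y) \<in> A"
    and "\<forall>y\<in>C. \<forall>x x'. (x,y) \<in> A \<longrightarrow> (x',y) \<in> A \<longrightarrow> x = x'"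
proof -
  obtain n vs where n: "n \<ge> 3" and bij: "bij_betw vs {1..n} C" and
    S: "A \<inter> (C \<times> C) = {(vs i, vs (Suc i)) | i. 1 \<le> i \<and> i < n} \<union> {(vs n, vs 1)}"
    using assms(1) unfolding unidirectional_def by blast
  define nx where "nx i = (if i < n then Suc i else 1)" for i
  have inj: "inj_on vs {1..n}" and C: "C = vs ` {1..n}" using bij by (simp_all add: bij_betw_imp_inj_on bij_betw_imp_surj_on)
  have S2: "A \<inter> (C \<times> C) = {(vs i, vs (nx i)) | i. i \<in> {1..n}}"
  proof -
    have "{(vs i, vs (Suc i)) | i. 1 \<le> i \<and> i < n} \<union> {(vs n, vs 1)} = {(vs i, vs (nx i)) | i. i \<in> {1..n}}"
    proof (rule set_eqI, rule iffI)
      fix p assume "p \<in> {(vs i, vs (Suc i)) | i. 1 \<le> i \<and> i < n} \<union> {(vs n, vs 1)}"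
      then show "p \<in> {(vs i, vs (nx i)) | i. i \<in> {1..n}}"
      proof
        assume "p \<in> {(vs i, vs (Suc i)) | i. 1 \<le> i \<and> i < n}"
        then obtain i where "1 \<le> i" "i < n" "p = (vs i, vs (Suc i))" by blast
        then show ?thesis unfolding nx_def by (intro CollectI exI[of _ i]) auto
      next
        assume "p \<in> {(vs n, vs 1)}"
        then show ?thesis unfolding nx_def using n by (intro CollectI exI[of _ n]) auto
      qed
    next
      fix p assume "p \<in> {(vs i, vs (nx i)) | i. i \<in> {1..n}}"
      then obtain i where i: "i \<in> {1..n}" "p = (vs i, vs (nx i))" by blast
      show "p \<in> {(vs i, vs (Suc i)) | i. 1 \<le> i \<and> i < n} \<union> {(vs n, vs 1)}"
      proof (cases "i < n")
        case True then show ?thesis using i unfolding nx_def by auto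
      next
        case False then have "i = n" using i by auto
        then show ?thesis using i unfolding nx_def by auto
      qed
    qed
    then show ?thesis using S by simp
  qed
  have arc: "(x,y) \<in> A \<Longrightarrow> x \<in> C \<or> y \<in> C \<Longrightarrow> \<exists>i\<in>{1..n}. x = vs i \<and> y = vs (nx i)" for x y
  proof -
    assume "(x,y) \<in> A" "x \<in> C \<or> y \<in> C"
    then have "x \<in> C" "y \<in> C" using cl by blast+
    with \<open>(x,y) \<in> A\<close> have "(x,y) \<in> A \<inter> (C \<times> C)" by blast
    then show ?thesis unfolding S2 by auto
  qed
  have nxin: "i \<in> {1..n} \<Longrightarrow> nx i \<in> {1..n}" for i unfolding nx_def by auto
  have nxinj: "i \<in> {1..n} \<Longrightarrow> j \<in> {1..n} \<Longrightarrow> nx i = nx j \<Longrightarrow> i = j" for i j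
    unfolding nx_def by (cases "i < n"; cases "j < n") auto
  show "\<forall>x\<in>C. \<exists>!y. (x,y) \<in> A"
  proof
    fix x assume "x \<in> C"
    then obtain i where i: "i \<in> {1..n}" "x = vs i" using C by auto
    have "(x, vs (nx i)) \<in> A" using S2 i by auto
    moreover have "(x,y) \<in> A \<Longrightarrow> y = vs (nx i)" for y
    proof -
      assume "(x,y) \<in> A"
      then obtain j where j: "j \<in> {1..n}" "x = vs j" "y = vs (nx j)" using arc[of x y] \<open>x \<in> C\<close> by blast
      then have "vs j = vs i" using i(2) by simp
      then have "j = i" using inj_onD[OF inj _ j(1) i(1)] by blast
      then show ?thesis using j by simp
    qed
    ultimately show "\<exists>!y. (x,y) \<in> A" by blast
  qed
  show "\<forall>y\<in>C. \<forall>x x'. (x,y) \<in> A \<longrightarrow> (x',y) \<in> A \<longrightarrow> x = x'"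
  proof (intro ballI allI impI)
    fix y x x' assume "y \<in> C" "(x,y) \<in> A" "(x',y) \<in> A"
    obtain i where i: "i \<in> {1..n}" "x = vs i" "y = vs (nx i)"
      using arc[of x y] \<open>y \<in> C\<close> \<open>(x,y) \<in> A\<close> by blast
    obtain j where j: "j \<in> {1..n}" "x' = vs j" "y = vs (nx j)"
      using arc[of x' y] \<open>y \<in> C\<close> \<open>(x',y) \<in> A\<close> by blast
    have "vs (nx i) = vs (nx j)" using i j by simp
    then have "nx i = nx j" using inj_onD[OF inj _ nxin[OF i(1)] nxin[OF j(1)]] by blast
    then have "i = j" using nxinj i(1) j(1) by blast
    then show "x = x'" using i j by simp
  qed
qed

lemma theta_props:
  assumes "theta_oriented A C" and cl: "\<forall>x y. (x,y) \<in> A \<longrightarrow> (x \<in> C \<longleftrightarrow> y \<in> C)"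
  shows "\<exists>a b z. a \<in> C \<and> b \<in> C \<and> z \<in> C \<and> b \<noteq> z \<and>
     {y. (a,y) \<in> A} = {b,z} \<and> {y. (z,y) \<in> A} = {} \<and>
     (\<forall>x\<in>C-{a,z}. \<exists>!y. (x,y) \<in> A) \<and>
     (\<forall>y\<in>C. \<forall>x x'. (x,y) \<in> A \<longrightarrow> (x',y) \<in> A \<longrightarrow> x \<noteq> a \<longrightarrow> x' \<noteq> a \<longrightarrow> x = x') \<and>
     (\<forall>x. (x,b) \<in> A \<longrightarrow> x = a)"
proof -
  obtain n vs where n: "n \<ge> 3" and bij: "bij_betw vs {1..n} C" and
    S: "A \<inter> (C \<times> C) = {(vs i, vs (Suc i)) | i. 1 \<le> i \<and> i < n} \<union> {(vs 1, vs n)}"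
    using assms(1) unfolding theta_oriented_def by blast
  have inj: "inj_on vs {1..n}" and C: "C = vs ` {1..n}"
    using bij by (simp_all add: bij_betw_imp_inj_on bij_betw_imp_surj_on)
  have vi: "1 \<le> i \<Longrightarrow> i \<le> n \<Longrightarrow> 1 \<le> j \<Longrightarrow> j \<le> n \<Longrightarrow> vs i = vs j \<longleftrightarrow> i = j" for i j
    using inj_onD[OF inj, of i j] by auto
  have arc: "(x,y) \<in> A \<Longrightarrow> x \<in> C \<or> y \<in> C \<Longrightarrow>
     (\<exists>i. 1 \<le> i \<and> i < n \<and> x = vs i \<and> y = vs (Suc i)) \<or> (x = vs 1 \<and> y = vs n)" for x y
  proof -
    assume "(x,y) \<in> A" "x \<in> C \<or> y \<in> C"
    then have "x \<in> C" "y \<in> C" using cl by blast+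
    with \<open>(x,y) \<in> A\<close> have "(x,y) \<in> A \<inter> (C \<times> C)" by blast
    then show ?thesis unfolding S by blast
  qed
  have inA1: "1 \<le> i \<Longrightarrow> i < n \<Longrightarrow> (vs i, vs (Suc i)) \<in> A" for i using S by blast
  have inA2: "(vs 1, vs n) \<in> A" using S by blast
  have vsC: "1 \<le> i \<Longrightarrow> i \<le> n \<Longrightarrow> vs i \<in> C" for i using C by auto
  have n1: "1 \<le> n" and n2: "2 \<le> n" using n by auto
  show ?thesis
  proof (intro exI conjI)
    show "vs 1 \<in> C" "vs 2 \<in> C" "vs n \<in> C" using vsC n by auto
    show "vs 2 \<noteq> vs n"
    proof
      assume "vs 2 = vs n" then have "2 = n" using vi[of 2 n] n2 by simp
      then show False using n by simp
    qed
    show "{y. (vs 1, y) \<in> A} = {vs 2, vs n}"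
    proof -
      have "y = vs 2 \<or> y = vs n" if h: "(vs 1, y) \<in> A" for y
      proof -
        have "(\<exists>i. 1 \<le> i \<and> i < n \<and> vs 1 = vs i \<and> y = vs (Suc i)) \<or> (vs 1 = vs 1 \<and> y = vs n)"
          using arc[OF h] vsC[of 1] n1 by blast
        then show ?thesis
        proof
          assume "\<exists>i. 1 \<le> i \<and> i < n \<and> vs 1 = vs i \<and> y = vs (Suc i)"
          then obtain i where "1 \<le> i" "i < n" "vs 1 = vs i" "y = vs (Suc i)" by blast
          then have "1 = i" using vi[of 1 i] n1 by simp
          then show ?thesis using \<open>y = vs (Suc i)\<close> by (simp add: numeral_2_eq_2)
        qed simp
      qed
      moreover have "(vs 1, vs 2) \<in> A" using inA1[of 1] n by (simp add: numeral_2_eq_2)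
      ultimately show ?thesis using inA2 by blast
    qed
    show "{y. (vs n, y) \<in> A} = {}"
    proof -
      have False if h: "(vs n, y) \<in> A" for y
      proof -
        have "(\<exists>i. 1 \<le> i \<and> i < n \<and> vs n = vs i \<and> y = vs (Suc i)) \<or> (vs n = vs 1 \<and> y = vs n)"
          using arc[OF h] vsC[of n] n1 by blast
        then show False
        proof
          assume "\<exists>i. 1 \<le> i \<and> i < n \<and> vs n = vs i \<and> y = vs (Suc i)"
          then obtain i where "1 \<le> i" "i < n" "vs n = vs i" by blast
          then have "n = i" using vi[of n i] n1 by simp
          then show False using \<open>i < n\<close> by simp
        next
          assume "vs n = vs 1 \<and> y = vs n"
          then have "n = 1" using vi[of n 1] n1 by simp
          then show False using n by simp
        qed
      qed
      then show ?thesis by blast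
    qed
    show "\<forall>x\<in>C-{vs 1, vs n}. \<exists>!y. (x,y) \<in> A"
    proof
      fix x assume x: "x \<in> C - {vs 1, vs n}"
      have "x \<in> vs ` {1..n}" using x C by blast
      then obtain i where i: "1 \<le> i" "i \<le> n" "x = vs i" by auto
      have "i \<noteq> 1" using x i by blast
      moreover have "i \<noteq> n" using x i by blast
      ultimately have i2: "1 < i" "i < n" using i by linarith+
      have "(x, vs (Suc i)) \<in> A" using inA1 i i2 by auto
      moreover have "y = vs (Suc i)" if h: "(x,y) \<in> A" for y
      proof -
        have "(\<exists>j. 1 \<le> j \<and> j < n \<and> x = vs j \<and> y = vs (Suc j)) \<or> (x = vs 1 \<and> y = vs n)"
          using arc[OF h] x by blast
        then show ?thesis
        proof
          assume "\<exists>j. 1 \<le> j \<and> j < n \<and> x = vs j \<and> y = vs (Suc j)"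
          then obtain j where j: "1 \<le> j" "j < n" "x = vs j" "y = vs (Suc j)" by blast
          have "vs j = vs i" using j(3) i(3) by simp
          from inj_onD[OF inj this] have "j = i" using i(1,2) j(1,2) by simp
          then show ?thesis using \<open>y = vs (Suc j)\<close> by simp
        next
          assume "x = vs 1 \<and> y = vs n" then show ?thesis using x by simp
        qed
      qed
      ultimately show "\<exists>!y. (x,y) \<in> A" by blast
    qed
    show "\<forall>y\<in>C. \<forall>x x'. (x,y) \<in> A \<longrightarrow> (x',y) \<in> A \<longrightarrow> x \<noteq> vs 1 \<longrightarrow> x' \<noteq> vs 1 \<longrightarrow> x = x'"
    proof (intro ballI allI impI)
      fix y x x' assume y: "y \<in> C" and h1: "(x,y) \<in> A" and h2: "(x',y) \<in> A" and "x \<noteq> vs 1" "x' \<noteq> vs 1"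
      obtain i where i: "1 \<le> i" "i < n" "x = vs i" "y = vs (Suc i)"
        using arc[OF h1] y \<open>x \<noteq> vs 1\<close> by blast
      obtain j where j: "1 \<le> j" "j < n" "x' = vs j" "y = vs (Suc j)"
        using arc[OF h2] y \<open>x' \<noteq> vs 1\<close> by blast
      have "vs (Suc i) = vs (Suc j)" using i j by simp
      then have "Suc i = Suc j" using vi[of "Suc i" "Suc j"] i j by simp
      then show "x = x'" using i j by simp
    qed
    show "\<forall>x. (x, vs 2) \<in> A \<longrightarrow> x = vs 1"
    proof (intro allI impI)
      fix x assume h: "(x, vs 2) \<in> A"
      have "vs 2 \<in> C" using vsC n2 by simp
      then have "(\<exists>i. 1 \<le> i \<and> i < n \<and> x = vs i \<and> vs 2 = vs (Suc i)) \<or> (x = vs 1 \<and> vs 2 = vs n)"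
        using arc[OF h] by blast
      then show "x = vs 1"
      proof
        assume "\<exists>i. 1 \<le> i \<and> i < n \<and> x = vs i \<and> vs 2 = vs (Suc i)"
        then obtain i where "1 \<le> i" "i < n" "x = vs i" "vs 2 = vs (Suc i)" by blast
        then have "2 = Suc i" using vi[of 2 "Suc i"] n2 by simp
        then show ?thesis using \<open>x = vs i\<close> by (simp add: numeral_2_eq_2)
      qed simp
    qed
  qed
qed


lemma comp_sub:
  assumes "oriented_graph V A" "C \<in> components V A" shows "C \<subseteq> V"
proof -
  have AV: "A \<subseteq> V \<times> V" using assms(1) by (simp add: oriented_graph_def)
  obtain u where C: "C = ((A \<union> A\<inverse>)\<^sup>*) `` {u}" and u: "u \<in> V" using assms(2) unfolding components_def by auto
  have "(u,y) \<in> (A \<union> A\<inverse>)\<^sup>* \<Longrightarrow> y \<in> V" for y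
  proof (induction rule: rtrancl_induct)
    case base then show ?case using u .
  next
    case (step y z) then show ?case using AV by auto
  qed
  then show ?thesis unfolding C by auto
qed

lemma ex_lab:
  assumes "finite V" "b \<in> V"
  shows "\<exists>f. bij_betw f V {1..card V} \<and> f b = card V"
proof -
  define m where "m = card V - 1"
  have cV: "card (V - {b}) = m" using assms unfolding m_def by simp
  have "card V > 0" using assms card_gt_0_iff by blast
  then have cpos: "card V = Suc m" unfolding m_def by simp
  obtain h where h: "bij_betw h (V - {b}) {0..<m}"
    using ex_bij_betw_finite_nat[of "V - {b}"] assms(1) cV by auto
  have hin: "x \<in> V \<Longrightarrow> x \<noteq> b \<Longrightarrow> h x < m" for x using bij_betw_apply[OF h, of x] by simp
  have hinj: "inj_on h (V - {b})" using h by (rule bij_betw_imp_inj_on)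
  have hsurj: "h ` (V - {b}) = {0..<m}" using h by (rule bij_betw_imp_surj_on)
  define f where "f x = (if x = b then card V else Suc (h x))" for x
  have finj: "inj_on f V"
  proof (rule inj_onI)
    fix x y assume xy: "x \<in> V" "y \<in> V" "f x = f y"
    show "x = y"
    proof (cases "x = b")
      case True
      show ?thesis
      proof (rule ccontr)
        assume "x \<noteq> y"
        then have "y \<noteq> b" using True by simp
        then have "f y < card V" using hin[OF xy(2)] cpos unfolding f_def by simp
        moreover have "f x = card V" using True unfolding f_def by simp
        ultimately show False using xy(3) by simp
      qed
    next
      case False
      show ?thesis
      proof (cases "y = b")
        case True
        then have "f y = card V" unfolding f_def by simp
        moreover have "f x < card V" using hin[OF xy(1) False] cpos False unfolding f_def by simp
        ultimately show ?thesis using xy(3) by simp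
      next
        case False2: False
        then have "h x = h y" using xy(3) False unfolding f_def by simp
        moreover have "x \<in> V - {b}" "y \<in> V - {b}" using xy False False2 by auto
        ultimately show ?thesis using inj_onD[OF hinj] by blast
      qed
    qed
  qed
  have fim: "f ` V = {1..card V}"
  proof
    show "f ` V \<subseteq> {1..card V}"
    proof
      fix t assume "t \<in> f ` V"
      then obtain x where x: "x \<in> V" "t = f x" by blast
      show "t \<in> {1..card V}"
      proof (cases "x = b")
        case True then show ?thesis using x cpos unfolding f_def by simp
      next
        case False
        then have "h x < m" using hin x(1) by blast
        then show ?thesis using x False cpos unfolding f_def by simp
      qed
    qed
    show "{1..card V} \<subseteq> f ` V"
    proof
      fix t assume t: "t \<in> {1..card V}"
      show "t \<in> f ` V"
      proof (cases "t = card V")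
        case True
        then have "t = f b" unfolding f_def by simp
        then show ?thesis using assms(2) by (rule rev_image_eqI[rotated])
      next
        case False
        then have "t - 1 \<in> {0..<m}" using t cpos by auto
        then have "t - 1 \<in> h ` (V - {b})" using hsurj by simp
        then obtain x where x1: "t - 1 = h x" and x2: "x \<in> V - {b}" by (rule imageE)
        have x: "x \<in> V" "x \<noteq> b" using x2 by auto
        have "t = Suc (h x)" using x1 t by auto
        moreover have "f x = Suc (h x)" using x(2) unfolding f_def by simp
        ultimately have "t = f x" by simp
        then show ?thesis using x(1) by (intro rev_image_eqI[of x]) auto
      qed
    qed
  qed
  have "f b = card V" unfolding f_def by simp
  then show ?thesis using finj fim unfolding bij_betw_def by blast
qed

theorem mainTheorem17:
  fixes V :: "'a set" and A :: "('a \<times> 'a) set"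
  assumes "oriented_graph V A"
    and "\<forall>C \<in> components V A. unidirectional A C \<or> theta_oriented A C"
    and "card (components V A) \<ge> 2"
  shows "D_antimagic V A {1} \<longleftrightarrow> card {C \<in> components V A. theta_oriented A C} \<le> 1"
proof -
  have fin: "finite V" and AV: "A \<subseteq> V \<times> V" using assms(1) by (auto simp: oriented_graph_def)
  have W: "weight_D V A {1} f v = (\<Sum>x\<in>{y. (v,y) \<in> A}. f x)" for f v
    unfolding weight_D_def nbhd1[OF assms(1)] by (rule refl)
  have cl: "\<forall>x y. (x,y) \<in> A \<longrightarrow> (x \<in> C \<longleftrightarrow> y \<in> C)" if "C \<in> components V A" for C
    using comp_closed[OF that] by blast
  define T where "T = {C \<in> components V A. theta_oriented A C}"
  have finT: "finite T" unfolding T_def using comp_finite[OF fin] by simp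
  show ?thesis unfolding T_def[symmetric]
  proof
    assume "D_antimagic V A {1}"
    then obtain f where inj: "inj_on (weight_D V A {1} f) V"
      unfolding D_antimagic_def D_antimagic_labeling_def by blast
    show "card T \<le> 1"
    proof (rule ccontr)
      assume "\<not> card T \<le> 1"
      then obtain C1 C2 where C: "C1 \<in> T" "C2 \<in> T" "C1 \<noteq> C2"
        using card_le_Suc0_iff_eq[OF finT] by auto
      have sink: "\<exists>z \<in> C. {y. (z,y) \<in> A} = {}" if "C \<in> T" for C
      proof -
        have "C \<in> components V A" "theta_oriented A C" using that T_def by auto
        from theta_props[OF this(2) cl[OF this(1)]] show ?thesis by blast
      qed
      obtain z1 z2 where z: "z1 \<in> C1" "z2 \<in> C2" "{y. (z1,y) \<in> A} = {}" "{y. (z2,y) \<in> A} = {}"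
        using sink C by meson
      have Cc: "C1 \<in> components V A" "C2 \<in> components V A" using C T_def by auto
      have "z1 \<noteq> z2" using comp_eq[OF Cc] z C(3) by blast
      moreover have "z1 \<in> V" "z2 \<in> V" using comp_sub[OF assms(1)] Cc z by blast+
      moreover have "weight_D V A {1} f z1 = weight_D V A {1} f z2" using z unfolding W by simp
      ultimately show False using inj unfolding inj_on_def by blast
    qed
  next
    assume cT: "card T \<le> 1"
    define s where "s v = (THE y. (v,y) \<in> A)" for v
    have sv: "(\<exists>!y. (v,y) \<in> A) \<Longrightarrow> {y. (v,y) \<in> A} = {s v} \<and> s v \<in> V" for v
    proof -
      assume h: "\<exists>!y. (v,y) \<in> A"
      then have "(v, s v) \<in> A" unfolding s_def by (rule theI')
      moreover have "y = s v" if "(v,y) \<in> A" for y using h that \<open>(v, s v) \<in> A\<close> by blast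
      ultimately have "{y. (v,y) \<in> A} = {s v}" by blast
      moreover have "s v \<in> V" using \<open>(v, s v) \<in> A\<close> AV by blast
      ultimately show ?thesis by blast
    qed
    have "T = {} \<or> (\<exists>Th. T = {Th})"
    proof (cases "T = {}")
      case False
      then obtain Th where "Th \<in> T" by blast
      moreover have "\<forall>a\<in>T. \<forall>b\<in>T. a = b" using cT card_le_Suc0_iff_eq[OF finT] by simp
      ultimately have "T = {Th}" by blast
      then show ?thesis by blast
    qed simp
    then show "D_antimagic V A {1}"
    proof
      assume T0: "T = {}"
      have uni: "C \<in> components V A \<Longrightarrow> unidirectional A C" for C
      proof -
        assume C: "C \<in> components V A"
        have "C \<notin> T" using T0 by blast
        then have "\<not> theta_oriented A C" using C unfolding T_def by blast
        then show ?thesis using assms(2) C by blast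
      qed
      have out: "v \<in> V \<Longrightarrow> \<exists>!y. (v,y) \<in> A" for v
      proof -
        assume "v \<in> V"
        then obtain C where C: "C \<in> components V A" "v \<in> C" using comp_cover[of v V A] by blast
        show ?thesis by (rule bspec[OF uni_props(1)[OF uni[OF C(1)] cl[OF C(1)]] C(2)])
      qed
      have inu: "y \<in> V \<Longrightarrow> (x,y) \<in> A \<Longrightarrow> (x',y) \<in> A \<Longrightarrow> x = x'" for x x' y
      proof -
        assume "y \<in> V" "(x,y) \<in> A" "(x',y) \<in> A"
        moreover obtain C where C: "C \<in> components V A" "y \<in> C" using comp_cover[of y V A] \<open>y \<in> V\<close> by blast
        ultimately show ?thesis using uni_props(2)[OF uni[OF C(1)] cl[OF C(1)]] by blast
      qed
      obtain f where f: "bij_betw f V {1..card V}"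
      proof (cases "V = {}")
        case True then show ?thesis using that by (simp add: bij_betw_def)
      next
        case False then obtain b where "b \<in> V" by blast
        then show ?thesis using ex_lab[OF fin] that by blast
      qed
      have wt: "v \<in> V \<Longrightarrow> weight_D V A {1} f v = f (s v)" for v
        using sv[OF out] unfolding W by simp
      have "inj_on (weight_D V A {1} f) V"
      proof (rule inj_onI)
        fix v w assume vw: "v \<in> V" "w \<in> V" "weight_D V A {1} f v = weight_D V A {1} f w"
        then have "f (s v) = f (s w)" using wt by simp
        moreover have "s v \<in> V" "s w \<in> V" using sv[OF out] vw by auto
        ultimately have "s v = s w" using f unfolding bij_betw_def inj_on_def by blast
        moreover have "(v, s v) \<in> A" "(w, s w) \<in> A" using sv[OF out] vw by auto
        ultimately show "v = w" using inu \<open>s v \<in> V\<close> by metis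
      qed
      then show ?thesis using f unfolding D_antimagic_def D_antimagic_labeling_def by blast
    next
      assume "\<exists>Th. T = {Th}"
      then obtain Th where T1: "T = {Th}" by blast
      have "Th \<in> T" using T1 by blast
      then have Th: "Th \<in> components V A" "theta_oriented A Th" unfolding T_def by blast+
      have uni: "C \<in> components V A \<Longrightarrow> C \<noteq> Th \<Longrightarrow> unidirectional A C" for C
      proof -
        assume C: "C \<in> components V A" "C \<noteq> Th"
        have "C \<notin> T" using T1 C(2) by blast
        then have "\<not> theta_oriented A C" using C unfolding T_def by blast
        then show ?thesis using assms(2) C by blast
      qed
      obtain a b z where abz0: "a \<in> Th \<and> b \<in> Th \<and> z \<in> Th \<and> b \<noteq> z \<and>
     {y. (a,y) \<in> A} = {b,z} \<and> {y. (z,y) \<in> A} = {} \<and>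
     (\<forall>x\<in>Th-{a,z}. \<exists>!y. (x,y) \<in> A) \<and>
     (\<forall>y\<in>Th. \<forall>x x'. (x,y) \<in> A \<longrightarrow> (x',y) \<in> A \<longrightarrow> x \<noteq> a \<longrightarrow> x' \<noteq> a \<longrightarrow> x = x') \<and>
     (\<forall>x. (x,b) \<in> A \<longrightarrow> x = a)"
        using theta_props[OF Th(2) cl[OF Th(1)]] by (elim exE) (rule that)
      have abz: "a \<in> Th" "b \<in> Th" "z \<in> Th" "b \<noteq> z"
        "{y. (a,y) \<in> A} = {b,z}" "{y. (z,y) \<in> A} = {}"
        "\<forall>x\<in>Th-{a,z}. \<exists>!y. (x,y) \<in> A"
        "\<forall>y\<in>Th. \<forall>x x'. (x,y) \<in> A \<longrightarrow> (x',y) \<in> A \<longrightarrow> x \<noteq> a \<longrightarrow> x' \<noteq> a \<longrightarrow> x = x'"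
        using abz0 apply -
        apply (elim conjE, assumption)+
        done
      have ThV: "Th \<subseteq> V" using comp_sub[OF assms(1) Th(1)] .
      have out: "v \<in> V \<Longrightarrow> v \<noteq> a \<Longrightarrow> v \<noteq> z \<Longrightarrow> \<exists>!y. (v,y) \<in> A" for v
      proof -
        assume "v \<in> V" "v \<noteq> a" "v \<noteq> z"
        then obtain C where C: "C \<in> components V A" "v \<in> C" using comp_cover[of v V A] by blast
        show ?thesis
        proof (cases "C = Th")
          case True
          then have "v \<in> Th - {a,z}" using C(2) \<open>v \<noteq> a\<close> \<open>v \<noteq> z\<close> by blast
          then show ?thesis by (rule bspec[OF abz(7)])
        next
          case False show ?thesis by (rule bspec[OF uni_props(1)[OF uni[OF C(1) False] cl[OF C(1)]] C(2)])
        qed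
      qed
      have inu: "y \<in> V \<Longrightarrow> (x,y) \<in> A \<Longrightarrow> (x',y) \<in> A \<Longrightarrow> x \<noteq> a \<Longrightarrow> x' \<noteq> a \<Longrightarrow> x = x'" for x x' y
      proof -
        assume h: "y \<in> V" "(x,y) \<in> A" "(x',y) \<in> A" "x \<noteq> a" "x' \<noteq> a"
        obtain C where C: "C \<in> components V A" "y \<in> C" using comp_cover[of y V A] \<open>y \<in> V\<close> by blast
        show ?thesis
        proof (cases "C = Th")
          case True then show ?thesis using abz(8) C h by blast
        next
          case False then show ?thesis using uni_props(2)[OF uni[OF C(1) False] cl[OF C(1)]] C h by blast
        qed
      qed
      have bV: "b \<in> V" "a \<in> V" "z \<in> V" using ThV abz by auto
      obtain f where f: "bij_betw f V {1..card V}" "f b = card V" using ex_lab[OF fin bV(1)] by blast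
      have frange: "x \<in> V \<Longrightarrow> 1 \<le> f x \<and> f x \<le> card V" for x using f(1) unfolding bij_betw_def by auto
      have wt: "v \<in> V \<Longrightarrow> v \<noteq> a \<Longrightarrow> v \<noteq> z \<Longrightarrow> weight_D V A {1} f v = f (s v)" for v
        using sv[OF out] unfolding W by simp
      have wz: "weight_D V A {1} f z = 0" using abz(6) unfolding W by simp
      have wa: "weight_D V A {1} f a = card V + f z" using abz(4,5) f(2) unfolding W by simp
      have wa2: "weight_D V A {1} f a > card V" using wa frange[OF bV(3)] by simp
      have wo: "v \<in> V \<Longrightarrow> v \<noteq> a \<Longrightarrow> v \<noteq> z \<Longrightarrow> 1 \<le> weight_D V A {1} f v \<and> weight_D V A {1} f v \<le> card V" for v
        using wt frange sv[OF out] by simp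
      have "inj_on (weight_D V A {1} f) V"
      proof (rule inj_onI)
        fix v w assume vw: "v \<in> V" "w \<in> V" "weight_D V A {1} f v = weight_D V A {1} f w"
        show "v = w"
        proof (cases "v = a \<or> v = z \<or> w = a \<or> w = z")
          case True
          then show ?thesis using vw wz wa2 wo[of v] wo[of w] by (metis not_le one_neq_zero le_zero_eq less_imp_le_nat not_one_le_zero)
        next
          case False
          then have nv: "v \<noteq> a" "v \<noteq> z" "w \<noteq> a" "w \<noteq> z" by auto
          have "f (s v) = f (s w)" using vw wt nv by simp
          moreover have "s v \<in> V" "s w \<in> V" using sv[OF out] vw nv by auto
          ultimately have "s v = s w" using f(1) unfolding bij_betw_def inj_on_def by blast
          moreover have "(v, s v) \<in> A" "(w, s w) \<in> A" using sv[OF out] vw nv by auto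
          ultimately show "v = w" using inu \<open>s v \<in> V\<close> nv by metis
        qed
      qed
      then show ?thesis using f unfolding D_antimagic_def D_antimagic_labeling_def by blast
    qed
  qed
qed

end
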